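(* Let $m,k$ be positive integers, let $A$ be the set of nonempty $k$-ary words that cyclically avoid the pattern $1^m$, and let $w(a_1\cdots a_l)=x_{a_1}x_{a_2}\cdots x_{a_l}$. Then \[ \sum_{W\in A}w(W)=\sum_{i=1}^k\frac{x_i^{2m}-mx_i^{m+1}+(m-1)x_i^m}{(x_i^m-1)(x_i-1)}+\frac{\sum_{i=1}^k\frac{(m-1)x_i^{m+1}-mx_i^m+x_i}{(x_i^m-1)^2}}{1-\sum_{i=1}^k\frac{x_i^m-x_i}{x_i^m-1}}. \]
   Context: A $k$-ary word is a finite sequence of letters from $\{1,\ldots,k\}$. A word contains the pattern $1^m$ if it has $m$ consecutive equal letters, and avoids it otherwise. With $r(a_1\cdots a_l)=a_la_1\cdots a_{l-1}$, a word $W$ cyclically avoids $1^m$ if $r^j(W)$ avoids $1^m$ for every $j$. *)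

theory Defs
  imports "HOL-Analysis.Analysis"
begin

text \<open>Words are lists of letters (natural numbers); a k-ary word has all letters in {1..k}.\<close>

definition contains_run :: "nat \<Rightarrow> nat list \<Rightarrow> bool" where
  "contains_run m W \<longleftrightarrow> (\<exists>i. i + m \<le> length W \<and> (\<forall>j<m. W ! (i + j) = W ! i))"

definition avoids_run :: "nat \<Rightarrow> nat list \<Rightarrow> bool" where
  "avoids_run m W \<longleftrightarrow> \<not> contains_run m W"

definition rot_r :: "'a list \<Rightarrow> 'a list" where
  "rot_r W = (if W = [] then [] else last W # butlast W)"

definition cyc_avoids_run :: "nat \<Rightarrow> nat list \<Rightarrow> bool" where
  "cyc_avoids_run m W \<longleftrightarrow> (\<forall>j. avoids_run m ((rot_r ^^ j) W))"

definition word_weight :: "(nat \<Rightarrow> complex) \<Rightarrow> nat list \<Rightarrow> complex" where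
  "word_weight x W = prod_list (map x W)"

end

theory Submission
  imports Defs
begin



lemma contains_run_appendL: "contains_run m A \<Longrightarrow> contains_run m (A @ B)"
  unfolding contains_run_def
proof (elim exE conjE)
  fix i assume h: "i + m \<le> length A" "\<forall>j<m. A ! (i + j) = A ! i"
  show "\<exists>i. i + m \<le> length (A @ B) \<and> (\<forall>j<m. (A @ B) ! (i + j) = (A @ B) ! i)"
  proof (rule exI[of _ i], intro conjI allI impI)
    fix j assume "j < m"
    then show "(A @ B) ! (i + j) = (A @ B) ! i" using h by (simp add: nth_append)
  qed (use h in simp)
qed

lemma contains_run_appendR: "contains_run m B \<Longrightarrow> contains_run m (A @ B)"
  unfolding contains_run_def
proof (elim exE conjE)
  fix i assume h: "i + m \<le> length B" "\<forall>j<m. B ! (i + j) = B ! i"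
  show "\<exists>i. i + m \<le> length (A @ B) \<and> (\<forall>j<m. (A @ B) ! (i + j) = (A @ B) ! i)"
    by (rule exI[of _ "length A + i"]) (use h in \<open>auto simp: nth_append add.assoc\<close>)
qed

lemma contains_run_split:
  assumes "A = [] \<or> B = [] \<or> last A \<noteq> hd B"
  shows "contains_run m (A @ B) \<longleftrightarrow> contains_run m A \<or> contains_run m B"
proof
  assume "contains_run m (A @ B)"
  then obtain i where i: "i + m \<le> length (A @ B)" and r: "\<forall>j<m. (A @ B) ! (i + j) = (A @ B) ! i"
    unfolding contains_run_def by blast
  show "contains_run m A \<or> contains_run m B"
  proof (cases "i + m \<le> length A")
    case True
    then have "contains_run m A" unfolding contains_run_def
      using r by (intro exI[of _ i]) (auto simp: nth_append)
    then show ?thesis ..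
  next
    case False
    show ?thesis
    proof (cases "length A \<le> i")
      case True
      have "contains_run m B" unfolding contains_run_def
      proof (intro exI[of _ "i - length A"] conjI allI impI)
        show "i - length A + m \<le> length B" using i True by simp
        fix j assume "j < m"
        then show "B ! (i - length A + j) = B ! (i - length A)"
          using r True by (auto simp: nth_append)
      qed
      then show ?thesis ..
    next
      case F2: False
      have A: "A \<noteq> []" using F2 by auto
      have B: "B \<noteq> []" using False i by auto
      have j1: "length A - 1 - i < m" "length A - i < m" using False F2 by auto
      have e1: "(A @ B) ! (i + (length A - 1 - i)) = last A"
        using A F2 by (simp add: nth_append last_conv_nth)
      have e2: "(A @ B) ! (i + (length A - i)) = hd B"
        using B F2 by (simp add: nth_append hd_conv_nth)
      have "last A = hd B" using r j1 e1 e2 by metis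
      then show ?thesis using assms A B by simp
    qed
  qed
next
  assume "contains_run m A \<or> contains_run m B"
  then show "contains_run m (A @ B)" using contains_run_appendL contains_run_appendR by blast
qed

lemma contains_run_short: "length W < m \<Longrightarrow> \<not> contains_run m W"
  unfolding contains_run_def by auto

lemma contains_run_replicate: "contains_run m (replicate l a) \<longleftrightarrow> m \<le> l"
proof
  assume "contains_run m (replicate l a)" then show "m \<le> l" unfolding contains_run_def by auto
next
  assume "m \<le> l" then show "contains_run m (replicate l a)" unfolding contains_run_def
    by (intro exI[of _ 0]) auto
qed




lemma rot_r_rotate: "rot_r V = rotate (length V - 1) V"
proof (cases V rule: rev_exhaust)
  case Nil then show ?thesis by (simp add: rot_r_def)
next
  case (snoc xs y)
  have "rotate (length xs) (xs @ [y]) = [y] @ xs"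
    by (simp add: rotate_drop_take)
  then show ?thesis using snoc by (simp add: rot_r_def)
qed

lemma length_rot_r[simp]: "length (rot_r V) = length V"
  by (simp add: rot_r_rotate)

lemma rot_r_pow: "(rot_r ^^ j) W = rotate (j * (length W - 1)) W"
proof (induction j)
  case 0 then show ?case by simp
next
  case (Suc j)
  have len: "length ((rot_r ^^ j) W) = length W" by (simp add: Suc)
  show ?case using Suc len by (simp add: rot_r_rotate rotate_rotate add.commute)
qed

lemma mod_aux: "(j * t * t) mod (Suc t) = j mod (Suc t)"
proof (cases t)
  case 0 then show ?thesis by simp
next
  case (Suc u)
  have "j * t * t = j + (j * u) * Suc t"
    using Suc by (simp add: algebra_simps)
  then show ?thesis by (metis mod_mult_self1)
qed

lemma cyc_rotate: "cyc_avoids_run m W \<longleftrightarrow> (\<forall>j. \<not> contains_run m (rotate j W))"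
proof
  assume h: "cyc_avoids_run m W"
  show "\<forall>j. \<not> contains_run m (rotate j W)"
  proof
    fix j
    show "\<not> contains_run m (rotate j W)"
    proof (cases "W = []")
      case True then show ?thesis using h unfolding cyc_avoids_run_def avoids_run_def by (metis funpow_0 rotate_is_Nil_conv)
    next
      case False
      then obtain t where t: "length W = Suc t" by (cases W) auto
      have "rotate j W = rotate (j * t * t) W"
        by (metis mod_aux rotate_conv_mod t)
      also have "\<dots> = (rot_r ^^ (j * t)) W" by (simp add: rot_r_pow t)
      finally show ?thesis using h by (simp add: cyc_avoids_run_def avoids_run_def)
    qed
  qed
next
  assume "\<forall>j. \<not> contains_run m (rotate j W)"
  then show "cyc_avoids_run m W" by (simp add: cyc_avoids_run_def avoids_run_def rot_r_pow)
qed

lemma cyc_WW: "cyc_avoids_run m W \<longleftrightarrow> (length W < m \<or> \<not> contains_run m (W @ W))"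
proof -
  have "(\<forall>j. \<not> contains_run m (rotate j W)) \<longleftrightarrow> (length W < m \<or> \<not> contains_run m (W @ W))"
  proof
    assume h: "\<forall>j. \<not> contains_run m (rotate j W)"
    show "length W < m \<or> \<not> contains_run m (W @ W)"
    proof (rule ccontr)
      assume "\<not> ?thesis"
      then have mn: "m \<le> length W" and c: "contains_run m (W @ W)" by auto
      then obtain i where i: "i + m \<le> length (W @ W)" and r: "\<forall>j<m. (W @ W) ! (i + j) = (W @ W) ! i"
        unfolding contains_run_def by blast
      show False
      proof (cases "i < length W")
        case True
        have WW: "W @ W = take i W @ rotate i W @ drop i W"
          using True by (simp add: rotate_drop_take)
        have nth: "(W @ W) ! (i + j) = rotate i W ! j" if "j < length W" for j
        proof -
          have "(W @ W) ! (i + j) = (take i W @ (rotate i W @ drop i W)) ! (i + j)"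
            using WW by simp
          also have "\<dots> = rotate i W ! j" using True that by (simp add: nth_append)
          finally show ?thesis .
        qed
        have "contains_run m (rotate i W)" unfolding contains_run_def
        proof (rule exI[of _ 0], intro conjI allI impI)
          show "0 + m \<le> length (rotate i W)" using mn by simp
          fix j assume "j < m"
          then show "rotate i W ! (0 + j) = rotate i W ! 0"
            using r nth[of j] nth[of 0] mn by (metis add.right_neutral le_less_trans less_le_trans not_gr_zero not_less0 plus_nat.add_0)
        qed
        then show False using h by blast
      next
        case False
        have "contains_run m W" unfolding contains_run_def
        proof (rule exI[of _ "i - length W"], intro conjI allI impI)
          show "i - length W + m \<le> length W" using i False by simp
          fix j assume "j < m"
          then show "W ! (i - length W + j) = W ! (i - length W)"
            using r False by (auto simp: nth_append)
        qed
        then show False using h[rule_format, of 0] by simp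
      qed
    qed
  next
    assume h: "length W < m \<or> \<not> contains_run m (W @ W)"
    show "\<forall>j. \<not> contains_run m (rotate j W)"
    proof
      fix j
      show "\<not> contains_run m (rotate j W)"
      proof (cases "length W < m")
        case True then show ?thesis by (simp add: contains_run_short)
      next
        case False
        define j' where "j' = j mod length W"
        have "W @ W = take j' W @ rotate j W @ drop j' W"
          by (simp add: rotate_drop_take j'_def)
        then show ?thesis using h False contains_run_appendL contains_run_appendR by metis
      qed
    qed
  qed
  then show ?thesis by (simp add: cyc_rotate)
qed




lemma takeWhile_rep: "\<forall>y\<in>set (takeWhile (\<lambda>c. c = a) xs). y = a"
  by (auto dest: set_takeWhileD)

lemma decomp_trail: "W = rev (dropWhile (\<lambda>c. c = a) (rev W)) @ replicate (length (takeWhile (\<lambda>c. c = a) (rev W))) a"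
proof -
  have "rev W = takeWhile (\<lambda>c. c = a) (rev W) @ dropWhile (\<lambda>c. c = a) (rev W)" by simp
  also have "takeWhile (\<lambda>c. c = a) (rev W) = replicate (length (takeWhile (\<lambda>c. c = a) (rev W))) a"
    by (metis replicate_length_same takeWhile_rep)
  finally have "rev W = replicate (length (takeWhile (\<lambda>c. c = a) (rev W))) a @ dropWhile (\<lambda>c. c = a) (rev W)" .
  then show ?thesis by (metis rev_append rev_replicate rev_rev_ident)
qed

lemma decomp_lead: "W = replicate (length (takeWhile (\<lambda>c. c = a) W)) a @ dropWhile (\<lambda>c. c = a) W"
  by (metis replicate_length_same takeWhile_dropWhile_id takeWhile_rep)

lemma lead_rep: "V = [] \<or> hd V \<noteq> a \<Longrightarrow> takeWhile (\<lambda>c. c = a) (replicate p a @ V) = replicate p a"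
  by (induct p) (cases V, auto)+

lemma trail_rep: "V = [] \<or> last V \<noteq> a \<Longrightarrow> takeWhile (\<lambda>c. c = a) (rev (V @ replicate r a)) = replicate r a"
  using lead_rep[of "rev V" a r] by (auto simp: hd_rev)

lemma snoc_inj:
  assumes "V = [] \<or> last V \<noteq> a" "V' = [] \<or> last V' \<noteq> a" "V @ replicate r a = V' @ replicate r' a"
  shows "r = r' \<and> V = V'"
proof -
  have "replicate r a = replicate r' a" using trail_rep[OF assms(1), of r] trail_rep[OF assms(2), of r'] assms(3) by simp
  then have "r = r'" by (metis length_replicate)
  then show ?thesis using assms(3) by simp
qed

lemma avoid_snoc: "V = [] \<or> last V \<noteq> a \<Longrightarrow> contains_run m (V @ replicate r a) \<longleftrightarrow> contains_run m V \<or> m \<le> r"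
  by (subst contains_run_split) (auto simp: contains_run_replicate)

lemma cyc_const: "l \<ge> 1 \<Longrightarrow> cyc_avoids_run m (replicate l a) \<longleftrightarrow> l < m"
proof -
  assume "l \<ge> 1"
  have "replicate l a @ replicate l a = replicate (l + l) a" by (simp add: replicate_add)
  then show ?thesis by (simp add: cyc_WW contains_run_replicate) linarith
qed

lemma cyc_form:
  assumes p: "p \<ge> 1" and V: "V \<noteq> []" "hd V \<noteq> a" "last V \<noteq> a"
  shows "cyc_avoids_run m (replicate p a @ V @ replicate q a) \<longleftrightarrow> p + q < m \<and> \<not> contains_run m V"
proof -
  let ?W = "replicate p a @ V @ replicate q a"
  have WW: "?W @ ?W = replicate p a @ (V @ (replicate (q + p) a @ (V @ replicate q a)))"
    by (simp add: replicate_add)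
  have s4: "contains_run m (V @ replicate q a) \<longleftrightarrow> contains_run m V \<or> m \<le> q"
    using V by (intro avoid_snoc) simp
  have s3: "contains_run m (replicate (q + p) a @ (V @ replicate q a)) \<longleftrightarrow> m \<le> q + p \<or> contains_run m (V @ replicate q a)"
    using V p by (subst contains_run_split) (auto simp: contains_run_replicate)
  have s2: "contains_run m (V @ (replicate (q + p) a @ (V @ replicate q a))) \<longleftrightarrow> contains_run m V \<or> contains_run m (replicate (q + p) a @ (V @ replicate q a))"
    using V p by (subst contains_run_split) auto
  have s1: "contains_run m (replicate p a @ (V @ (replicate (q + p) a @ (V @ replicate q a)))) \<longleftrightarrow> m \<le> p \<or> contains_run m (V @ (replicate (q + p) a @ (V @ replicate q a)))"
    using V p by (subst contains_run_split) (auto simp: contains_run_replicate)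
  have c: "contains_run m (?W @ ?W) \<longleftrightarrow> contains_run m V \<or> m \<le> p + q"
    unfolding WW s1 s2 s3 s4 by auto
  show ?thesis
  proof (cases "length ?W < m")
    case True
    then have "p + q < m" "length V < m" by auto
    then show ?thesis using True by (simp add: cyc_WW contains_run_short)
  next
    case False
    then show ?thesis by (simp only: cyc_WW c) auto
  qed
qed




definition "Lin m k = {V. set V \<subseteq> {1..k} \<and> \<not> contains_run m V}"
definition "Ends m k a = {V \<in> Lin m k. V \<noteq> [] \<and> last V = a}"
definition "NE m k a = {V \<in> Lin m k. V = [] \<or> last V \<noteq> a}"
definition "Mid m k a = {V \<in> Lin m k. V \<noteq> [] \<and> hd V \<noteq> a \<and> last V \<noteq> a}"
definition "BS m k a = {V \<in> Lin m k. V = [] \<or> hd V \<noteq> a}"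
definition "EM m k a = {V \<in> Lin m k. V \<noteq> [] \<and> hd V \<noteq> a \<and> last V = a}"
definition "Cyc m k = {W. W \<noteq> [] \<and> set W \<subseteq> {1..k} \<and> cyc_avoids_run m W}"
definition "CycA m k a = {W \<in> Cyc m k. hd W = a}"
definition "Const m a = (\<lambda>l. replicate l a) ` {1..<m}"
definition "ncmap a = (\<lambda>((s::nat,p::nat),V). replicate p a @ V @ replicate (s - p) a)"
definition "NC m k a = ncmap a ` (Sigma {1..<m} (\<lambda>s. {1..s}) \<times> Mid m k a)"
definition "snocmap a = (\<lambda>(r::nat, V). V @ replicate r a)"

lemma snoc_inj_on: "inj_on (snocmap a) ({1..<m} \<times> NE m k a)"
proof (rule inj_onI)
  fix u v assume u: "u \<in> {1..<m} \<times> NE m k a" and v: "v \<in> {1..<m} \<times> NE m k a"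
    and e: "snocmap a u = snocmap a v"
  obtain r V where "u = (r, V)" by (cases u)
  moreover obtain r' V' where "v = (r', V')" by (cases v)
  ultimately show "u = v" using snoc_inj[of V a V' r r'] u v e by (simp add: snocmap_def NE_def)
qed

lemma Ends_image:
  assumes a: "a \<in> {1..k}"
  shows "Ends m k a = snocmap a ` ({1..<m} \<times> NE m k a)"
proof
  show "snocmap a ` ({1..<m} \<times> NE m k a) \<subseteq> Ends m k a"
  proof clarify
    fix r V assume r: "r \<in> {1..<m}" and V: "V \<in> NE m k a"
    from V have V1: "set V \<subseteq> {1..k}" "\<not> contains_run m V" "V = [] \<or> last V \<noteq> a"
      by (auto simp: NE_def Lin_def)
    from r have r1: "r < m" "r \<ge> 1" by auto
    have nc: "\<not> contains_run m (V @ replicate r a)" using avoid_snoc[OF V1(3)] V1(2) r1 by simp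
    have st: "set (V @ replicate r a) \<subseteq> {1..k}" using V1(1) a by auto
    have ne: "V @ replicate r a \<noteq> []" "last (V @ replicate r a) = a" using r1 by auto
    show "snocmap a (r, V) \<in> Ends m k a"
      unfolding snocmap_def Ends_def Lin_def using nc st ne by simp
  qed
next
  show "Ends m k a \<subseteq> snocmap a ` ({1..<m} \<times> NE m k a)"
  proof
    fix W assume W: "W \<in> Ends m k a"
    define r where "r = length (takeWhile (\<lambda>c. c = a) (rev W))"
    define V where "V = rev (dropWhile (\<lambda>c. c = a) (rev W))"
    have WV: "W = V @ replicate r a" unfolding r_def V_def by (rule decomp_trail)
    have lV: "V = [] \<or> last V \<noteq> a"
    proof (cases "dropWhile (\<lambda>c. c = a) (rev W) = []")
      case True then show ?thesis by (simp add: V_def)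
    next
      case False
      then have "hd (dropWhile (\<lambda>c. c = a) (rev W)) \<noteq> a" using hd_dropWhile[OF False] by simp
      then show ?thesis using False by (simp add: V_def last_rev)
    qed
    have W1: "W \<noteq> []" "last W = a" "set W \<subseteq> {1..k}" "\<not> contains_run m W"
      using W by (simp_all add: Ends_def Lin_def)
    then have "rev W \<noteq> []" "hd (rev W) = a" by (simp_all add: hd_rev)
    then obtain t where "rev W = a # t" by (cases "rev W") auto
    then have "r \<ge> 1" by (simp add: r_def)
    have nc: "\<not> contains_run m W" using W1 by simp
    then have "r < m" "\<not> contains_run m V" using avoid_snoc[OF lV, of m r] WV by auto
    moreover have "set V \<subseteq> {1..k}" using W1(3) WV by (metis le_sup_iff set_append)
    ultimately have "(r, V) \<in> {1..<m} \<times> NE m k a" using lV \<open>r \<ge> 1\<close> by (simp add: NE_def Lin_def)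
    then show "W \<in> snocmap a ` ({1..<m} \<times> NE m k a)"
      by (rule image_eqI[rotated]) (simp add: snocmap_def WV[symmetric])
  qed
qed

lemma Mid_NE: "Mid m k a \<subseteq> NE m k a" by (auto simp: Mid_def NE_def)

lemma EM_image:
  assumes a: "a \<in> {1..k}"
  shows "EM m k a = snocmap a ` ({1..<m} \<times> Mid m k a)"
proof
  show "snocmap a ` ({1..<m} \<times> Mid m k a) \<subseteq> EM m k a"
  proof clarify
    fix r V assume r: "r \<in> {1..<m}" and V: "V \<in> Mid m k a"
    have "snocmap a (r, V) \<in> Ends m k a" using Ends_image[OF a] r V Mid_NE by blast
    then show "snocmap a (r, V) \<in> EM m k a" using V by (auto simp: snocmap_def Ends_def EM_def Mid_def)
  qed
next
  show "EM m k a \<subseteq> snocmap a ` ({1..<m} \<times> Mid m k a)"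
  proof
    fix W assume W: "W \<in> EM m k a"
    then have "W \<in> Ends m k a" by (auto simp: EM_def Ends_def)
    then obtain r V where rV: "r \<in> {1..<m}" "V \<in> NE m k a" "W = V @ replicate r a"
      using Ends_image[OF a] by (auto simp: snocmap_def)
    have "V \<noteq> []" using W rV by (auto simp: EM_def)
    then have "V \<in> Mid m k a" using W rV by (auto simp: EM_def Mid_def NE_def)
    then show "W \<in> snocmap a ` ({1..<m} \<times> Mid m k a)" using rV by (force simp: snocmap_def)
  qed
qed

lemma Lin_decomp:
  assumes m: "m \<ge> 1"
  shows "Lin m k = insert [] (\<Union>a\<in>{1..k}. Ends m k a)"
proof
  show "Lin m k \<subseteq> insert [] (\<Union>a\<in>{1..k}. Ends m k a)"
  proof
    fix V assume V: "V \<in> Lin m k"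
    show "V \<in> insert [] (\<Union>a\<in>{1..k}. Ends m k a)"
    proof (cases "V = []")
      case False
      then have "last V \<in> set V" by simp
      then have "last V \<in> {1..k}" using V by (auto simp: Lin_def)
      moreover have "V \<in> Ends m k (last V)" using V False by (simp add: Ends_def)
      ultimately show ?thesis by blast
    qed simp
  qed
next
  have "[] \<in> Lin m k" using m by (simp add: Lin_def contains_run_short)
  then show "insert [] (\<Union>a\<in>{1..k}. Ends m k a) \<subseteq> Lin m k" by (auto simp: Ends_def)
qed

lemma BS_decomp:
  assumes m: "m \<ge> 1"
  shows "BS m k a = insert [] (Mid m k a \<union> EM m k a)"
proof -
  have "[] \<in> Lin m k" using m by (simp add: Lin_def contains_run_short)
  then show ?thesis by (auto simp: BS_def Mid_def EM_def)
qed

lemma contains_run_rev1: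
  assumes "contains_run m V" shows "contains_run m (rev V)"
proof -
  obtain i where i: "i + m \<le> length V" and r: "\<forall>j<m. V ! (i + j) = V ! i"
    using assms unfolding contains_run_def by blast
  show ?thesis
  proof (cases "m = 0")
    case True then show ?thesis unfolding contains_run_def by (intro exI[of _ 0]) simp
  next
    case False
    define i' where "i' = length V - m - i"
    have e: "rev V ! (i' + j) = V ! i" if "j < m" for j
    proof -
      have "rev V ! (i' + j) = V ! (length V - Suc (i' + j))"
        using that i by (simp add: rev_nth i'_def)
      also have "length V - Suc (i' + j) = i + (m - 1 - j)" using that i by (simp add: i'_def)
      also have "V ! \<dots> = V ! i" using that by (intro r[rule_format]) simp
      finally show ?thesis .
    qed
    show ?thesis unfolding contains_run_def
    proof (rule exI[of _ i'], intro conjI allI impI)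
      show "i' + m \<le> length (rev V)" using i by (simp add: i'_def)
      fix j assume "j < m" then show "rev V ! (i' + j) = rev V ! i'"
        using e[of j] e[of 0] False by simp
    qed
  qed
qed

lemma contains_run_rev[simp]: "contains_run m (rev V) \<longleftrightarrow> contains_run m V"
  using contains_run_rev1[of m V] contains_run_rev1[of m "rev V"] by auto

lemma rev_bij: "bij_betw rev (NE m k a) (BS m k a)"
proof (rule bij_betw_imageI)
  show "inj_on rev (NE m k a)" by (simp add: inj_on_def)
  show "rev ` NE m k a = BS m k a"
  proof
    show "rev ` NE m k a \<subseteq> BS m k a" by (auto simp: NE_def BS_def Lin_def hd_rev)
    show "BS m k a \<subseteq> rev ` NE m k a"
    proof
      fix V assume "V \<in> BS m k a"
      then have "rev V \<in> NE m k a" by (auto simp: NE_def BS_def Lin_def last_rev)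
      then show "V \<in> rev ` NE m k a" by (rule image_eqI[rotated]) simp
    qed
  qed
qed

lemma Cyc_decomp: "Cyc m k = (\<Union>a\<in>{1..k}. CycA m k a)"
proof
  show "Cyc m k \<subseteq> (\<Union>a\<in>{1..k}. CycA m k a)"
  proof
    fix W assume W: "W \<in> Cyc m k"
    then have W1: "W \<noteq> []" "set W \<subseteq> {1..k}" by (auto simp: Cyc_def)
    then have "hd W \<in> set W" by simp
    then have "hd W \<in> {1..k}" using W1(2) by blast
    moreover have "W \<in> CycA m k (hd W)" using W by (simp add: CycA_def)
    ultimately show "W \<in> (\<Union>a\<in>{1..k}. CycA m k a)" by blast
  qed
qed (auto simp: CycA_def)

lemma const_inj: "inj_on (\<lambda>l. replicate l a) A"
  by (rule inj_onI) (metis length_replicate)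

lemma nc_inj: "inj_on (ncmap a) (Sigma {1..<m} (\<lambda>s. {1..s}) \<times> Mid m k a)"
proof (rule inj_onI)
  fix u v assume u: "u \<in> Sigma {1..<m} (\<lambda>s. {1..s}) \<times> Mid m k a"
    and v: "v \<in> Sigma {1..<m} (\<lambda>s. {1..s}) \<times> Mid m k a" and e: "ncmap a u = ncmap a v"
  obtain s p V where u': "u = ((s, p), V)" by (metis prod.collapse)
  obtain s' p' V' where v': "v = ((s', p'), V')" by (metis prod.collapse)
  have V: "V \<noteq> []" "hd V \<noteq> a" "last V \<noteq> a" "p \<le> s" using u u' by (auto simp: Mid_def)
  have V': "V' \<noteq> []" "hd V' \<noteq> a" "last V' \<noteq> a" "p' \<le> s'" using v v' by (auto simp: Mid_def)
  have e2: "replicate p a @ (V @ replicate (s - p) a) = replicate p' a @ (V' @ replicate (s' - p') a)"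
    using e u' v' by (simp add: ncmap_def)
  have "replicate p a = replicate p' a"
    using lead_rep[of "V @ replicate (s - p) a" a p] lead_rep[of "V' @ replicate (s' - p') a" a p'] V V' e2
    by simp
  then have pp: "p = p'" by (metis length_replicate)
  then have e3: "V @ replicate (s - p) a = V' @ replicate (s' - p') a" using e2 by simp
  have "s - p = s' - p' \<and> V = V'" by (rule snoc_inj[OF _ _ e3]) (use V V' in auto)
  then show "u = v" using u' v' pp V V' by auto
qed

lemma CycA_decomp:
  assumes a: "a \<in> {1..k}"
  shows "CycA m k a = Const m a \<union> NC m k a"
proof
  show "Const m a \<union> NC m k a \<subseteq> CycA m k a"
  proof
    fix W assume "W \<in> Const m a \<union> NC m k a"
    then show "W \<in> CycA m k a"
    proof
      assume "W \<in> Const m a"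
      then obtain l where l: "l \<in> {1..<m}" "W = replicate l a" by (auto simp: Const_def)
      then show ?thesis using a cyc_const[of l m a] by (auto simp: CycA_def Cyc_def)
    next
      assume "W \<in> NC m k a"
      then obtain s p V where sp: "s \<in> {1..<m}" "p \<in> {1..s}" "V \<in> Mid m k a"
        and W: "W = replicate p a @ V @ replicate (s - p) a"
        by (auto simp: NC_def ncmap_def)
      have V: "V \<noteq> []" "hd V \<noteq> a" "last V \<noteq> a" "set V \<subseteq> {1..k}" "\<not> contains_run m V"
        using sp(3) by (auto simp: Mid_def Lin_def)
      have p1: "p \<ge> 1" using sp by simp
      have "cyc_avoids_run m W" unfolding W
        using cyc_form[OF p1 V(1-3), of m "s - p"] sp V(5) by simp
      moreover have "set W \<subseteq> {1..k}" using V(4) a unfolding W by auto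
      moreover have "W \<noteq> []" "hd W = a" using p1 unfolding W by (cases p, simp_all)+
      ultimately show ?thesis by (simp add: CycA_def Cyc_def)
    qed
  qed
next
  show "CycA m k a \<subseteq> Const m a \<union> NC m k a"
  proof
    fix W assume W: "W \<in> CycA m k a"
    then have W1: "W \<noteq> []" "hd W = a" "set W \<subseteq> {1..k}" "cyc_avoids_run m W"
      by (auto simp: CycA_def Cyc_def)
    define p where "p = length (takeWhile (\<lambda>c. c = a) W)"
    define R where "R = dropWhile (\<lambda>c. c = a) W"
    have WR: "W = replicate p a @ R" unfolding p_def R_def by (rule decomp_lead)
    have p1: "p \<ge> 1"
    proof -
      obtain t where "W = a # t" using W1 by (cases W) auto
      then show ?thesis by (simp add: p_def)
    qed
    show "W \<in> Const m a \<union> NC m k a"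
    proof (cases "R = []")
      case True
      then have "W = replicate p a" using WR by simp
      moreover then have "p < m" using cyc_const[OF p1, of m a] W1(4) by simp
      ultimately have "W \<in> Const m a" using p1 by (auto simp: Const_def)
      then show ?thesis ..
    next
      case False
      then have hR: "hd R \<noteq> a" unfolding R_def by (rule hd_dropWhile)
      define q where "q = length (takeWhile (\<lambda>c. c = a) (rev R))"
      define V where "V = rev (dropWhile (\<lambda>c. c = a) (rev R))"
      have RV: "R = V @ replicate q a" unfolding q_def V_def by (rule decomp_trail)
      have lV: "V = [] \<or> last V \<noteq> a"
      proof (cases "dropWhile (\<lambda>c. c = a) (rev R) = []")
        case True then show ?thesis by (simp add: V_def)
      next
        case False
        then have "hd (dropWhile (\<lambda>c. c = a) (rev R)) \<noteq> a" using hd_dropWhile[OF False] by simp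
        then show ?thesis using False by (simp add: V_def last_rev)
      qed
      have VN: "V \<noteq> []"
      proof
        assume "V = []"
        then have "R = replicate q a" using RV by simp
        then show False using False hR by (cases q) auto
      qed
      have hV: "hd V \<noteq> a" using hR RV VN by simp
      have lV': "last V \<noteq> a" using lV VN by simp
      have WV: "W = replicate p a @ V @ replicate q a" using WR RV by simp
      have cf: "p + q < m \<and> \<not> contains_run m V"
        using cyc_form[OF p1 VN hV lV', of m q] W1(4) WV by simp
      have "set V \<subseteq> {1..k}" using W1(3) WV by auto
      then have "V \<in> Mid m k a" using cf VN hV lV' by (simp add: Mid_def Lin_def)
      moreover have "(p + q, p) \<in> Sigma {1..<m} (\<lambda>s. {1..s})" using cf p1 by simp
      ultimately have "((p + q, p), V) \<in> Sigma {1..<m} (\<lambda>s. {1..s}) \<times> Mid m k a" by simp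
      moreover have "W = ncmap a ((p + q, p), V)" using WV by (simp add: ncmap_def)
      ultimately have "W \<in> NC m k a" unfolding NC_def by blast
      then show ?thesis ..
    qed
  qed
qed

lemma Const_NC_disj: "Const m a \<inter> NC m k a = {}"
proof -
  have "W \<notin> NC m k a" if "W \<in> Const m a" for W
  proof
    assume "W \<in> NC m k a"
    then obtain s p V where V: "V \<in> Mid m k a" and W: "W = replicate p a @ V @ replicate (s - p) a"
      by (auto simp: NC_def ncmap_def)
    have "hd V \<in> set W" "hd V \<noteq> a" using V unfolding W by (auto simp: Mid_def)
    moreover have "set W \<subseteq> {a}" using that by (auto simp: Const_def)
    ultimately show False by auto
  qed
  then show ?thesis by blast
qed




lemma ww_append[simp]: "word_weight x (A @ B) = word_weight x A * word_weight x B"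
  by (simp add: word_weight_def)
lemma ww_rep[simp]: "word_weight x (replicate r a) = x a ^ r"
  by (simp add: word_weight_def prod_list_replicate)
lemma ww_rev[simp]: "word_weight x (rev V) = word_weight x V"
  by (simp add: word_weight_def rev_map[symmetric] prod_list.rev)
lemma ww_Nil[simp]: "word_weight x [] = 1"
  by (simp add: word_weight_def)

lemma norm_ww: "norm (word_weight x W) = prod_list (map (\<lambda>i. norm (x i)) W)"
  by (induct W) (simp_all add: word_weight_def norm_mult)

lemma sum_words:
  fixes g :: "nat \<Rightarrow> real"
  assumes K: "finite K"
  shows "(\<Sum>W\<in>{W. set W \<subseteq> K \<and> length W = n}. prod_list (map g W)) = (\<Sum>a\<in>K. g a) ^ n"
proof (induction n)
  case 0
  have "{W. set W \<subseteq> K \<and> length W = 0} = {[]}" by auto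
  then show ?case by simp
next
  case (Suc n)
  let ?Wn = "{W. set W \<subseteq> K \<and> length W = n}"
  have "(\<Sum>W\<in>{W. set W \<subseteq> K \<and> length W = Suc n}. prod_list (map g W))
      = (\<Sum>W\<in>(\<lambda>(xs, n). n#xs) ` (?Wn \<times> K). prod_list (map g W))"
    by (simp only: lists_length_Suc_eq)
  also have "\<dots> = (\<Sum>z\<in>?Wn \<times> K. prod_list (map g (case z of (xs, n) \<Rightarrow> n#xs)))"
    by (subst sum.reindex[OF inj_split_Cons]) (simp add: o_def)
  also have "\<dots> = (\<Sum>z\<in>?Wn \<times> K. case z of (xs, a) \<Rightarrow> prod_list (map g xs) * g a)"
    by (rule sum.cong) (auto simp: mult.commute)
  also have "\<dots> = (\<Sum>xs\<in>?Wn. \<Sum>a\<in>K. prod_list (map g xs) * g a)"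
    by (rule sum.cartesian_product[symmetric])
  also have "\<dots> = (\<Sum>xs\<in>?Wn. prod_list (map g xs)) * (\<Sum>a\<in>K. g a)"
    by (simp add: sum_product)
  finally show ?case using Suc by simp
qed

lemma summable_all:
  assumes s: "(\<Sum>i=1..k. norm (x i)) < 1"
  shows "word_weight x summable_on {W. set W \<subseteq> {1..k}}"
proof (rule abs_summable_summable)
  define s where "s = (\<Sum>i=1..k. norm (x i))"
  have s0: "s \<ge> 0" unfolding s_def by (simp add: sum_nonneg)
  have s1: "s < 1" using s by (simp add: s_def)
  let ?g = "\<lambda>W. norm (word_weight x W)"
  show "?g summable_on {W. set W \<subseteq> {1..k}}"
  proof (rule nonneg_bdd_above_summable_on)
    show "\<And>W. W \<in> {W. set W \<subseteq> {1..k}} \<Longrightarrow> 0 \<le> ?g W" by simp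
    show "bdd_above (sum ?g ` {F. F \<subseteq> {W. set W \<subseteq> {1..k}} \<and> finite F})"
    proof (rule bdd_aboveI)
      fix t assume "t \<in> sum ?g ` {F. F \<subseteq> {W. set W \<subseteq> {1..k}} \<and> finite F}"
      then obtain F where F: "F \<subseteq> {W. set W \<subseteq> {1..k}}" "finite F" and t: "t = sum ?g F" by blast
      define N where "N = Max (insert 0 (length ` F))"
      have lenN: "length W \<le> N" if "W \<in> F" for W
        unfolding N_def using F(2) that by (intro Max_ge) auto
      define G where "G = {W. set W \<subseteq> {1..k} \<and> length W \<le> N}"
      have FG: "F \<subseteq> G" using F lenN by (auto simp: G_def)
      have finG: "finite G" unfolding G_def by (rule finite_lists_length_le) simp
      have GU: "G = (\<Union>n\<in>{..N}. {W. set W \<subseteq> {1..k} \<and> length W = n})" by (auto simp: G_def)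
      have "sum ?g F \<le> sum ?g G" by (rule sum_mono2[OF finG FG]) simp
      also have "\<dots> = (\<Sum>n\<in>{..N}. \<Sum>W\<in>{W. set W \<subseteq> {1..k} \<and> length W = n}. ?g W)"
        unfolding GU by (rule sum.UNION_disjoint) (auto intro: finite_lists_length_eq)
      also have "\<dots> = (\<Sum>n\<in>{..N}. s ^ n)"
        by (rule sum.cong) (simp_all add: norm_ww sum_words s_def)
      also have "\<dots> = (\<Sum>n<Suc N. s ^ n)" by (simp add: lessThan_Suc_atMost)
      also have "\<dots> = (1 - s ^ Suc N) / (1 - s)" by (simp only: sum_gp_strict) (use s1 in simp)
      also have "\<dots> \<le> 1 / (1 - s)" using s0 s1 by (simp add: divide_right_mono)
      finally show "t \<le> 1 / (1 - s)" using t by simp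
    qed
  qed
qed

lemma prod_has_sum:
  fixes w :: "'b \<Rightarrow> complex" and h :: "'r \<times> 'b \<Rightarrow> 'b"
  assumes inj: "inj_on h (R \<times> B)" and img: "h ` (R \<times> B) = E" and fin: "finite R"
    and eq: "\<And>r V. r \<in> R \<Longrightarrow> V \<in> B \<Longrightarrow> w (h (r, V)) = c r * w V"
    and sE: "w summable_on E" and hB: "(w has_sum S) B"
  shows "(w has_sum ((\<Sum>r\<in>R. c r) * S)) E"
proof -
  have "((w \<circ> h) has_sum ((\<Sum>r\<in>R. c r) * S)) (Sigma R (\<lambda>_. B))"
  proof (rule has_sum_SigmaI)
    fix r assume r: "r \<in> R"
    have "((\<lambda>V. c r * w V) has_sum (c r * S)) B" by (rule has_sum_cmult_right[OF hB])
    then show "((\<lambda>V. (w \<circ> h) (r, V)) has_sum (c r * S)) B"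
      by (rule has_sum_cong[THEN iffD1, rotated]) (simp add: eq r)
  next
    show "((\<lambda>r. c r * S) has_sum ((\<Sum>r\<in>R. c r) * S)) R"
      using has_sum_finiteI[OF fin sum_distrib_right[of c R S]] by simp
  next
    show "(w \<circ> h) summable_on Sigma R (\<lambda>_. B)"
      using summable_on_reindex[OF inj, of w] sE img by simp
  qed
  then show ?thesis using has_sum_reindex[OF inj, of w] img by simp
qed




lemma y_closed:
  fixes X :: complex
  assumes "m \<ge> 1"
  shows "(X - 1) * (\<Sum>r\<in>{1..<m}. X ^ r) = X ^ m - X"
  using assms
proof (induction m)
  case 0 then show ?case by simp
next
  case (Suc m)
  show ?case
  proof (cases "m = 0")
    case True then show ?thesis by simp
  next
    case False
    then have "(\<Sum>r\<in>{1..<Suc m}. X ^ r) = (\<Sum>r\<in>{1..<m}. X ^ r) + X ^ m" by simp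
    then show ?thesis using Suc False by (simp add: algebra_simps)
  qed
qed

lemma c_closed:
  fixes X :: complex
  shows "(X - 1)^2 * (\<Sum>s\<in>{1..<m}. of_nat s * X ^ s) = (of_nat m - 1) * X ^ (m + 1) - of_nat m * X ^ m + X"
proof (induction m)
  case 0 then show ?case by simp
next
  case (Suc m)
  show ?case
  proof (cases "m = 0")
    case True then show ?thesis by simp
  next
    case False
    then have "(\<Sum>s\<in>{1..<Suc m}. of_nat s * X ^ s) = (\<Sum>s\<in>{1..<m}. of_nat s * X ^ s) + of_nat m * X ^ m" by simp
    then have "(X - 1)^2 * (\<Sum>s\<in>{1..<Suc m}. of_nat s * X ^ s) = (of_nat m - 1) * X ^ (m + 1) - of_nat m * X ^ m + X + (X - 1)^2 * of_nat m * X ^ m"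
      using Suc by (simp add: algebra_simps)
    then show ?thesis by (simp add: algebra_simps power2_eq_square)
  qed
qed

lemma final_alg:
  fixes X D y c :: complex
  assumes X1: "X \<noteq> 1" and Xm: "X ^ m \<noteq> 1" and D: "D \<noteq> 0"
    and y: "(X - 1) * y = X ^ m - X"
    and c: "(X - 1)^2 * c = (of_nat m - 1) * X ^ (m + 1) - of_nat m * X ^ m + X"
  shows "y + c * (1 / ((1 + y)^2 * D) - 1 / (1 + y)) =
    (X ^ (2*m) - of_nat m * X ^ (m+1) + (of_nat m - 1) * X ^ m) / ((X ^ m - 1) * (X - 1))
    + ((of_nat m - 1) * X ^ (m+1) - of_nat m * X ^ m + X) / (X ^ m - 1)^2 / D"
proof -
  define Z where "Z = X ^ m"
  have X1': "X - 1 \<noteq> 0" using X1 by simp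
  have Z1: "Z - 1 \<noteq> 0" using Xm by (simp add: Z_def)
  have e1: "X ^ (2*m) = Z * Z" by (simp add: Z_def power_mult power2_eq_square mult.commute)
  have e2: "X ^ (m+1) = Z * X" by (simp add: Z_def)
  have yv: "y = (Z - X) / (X - 1)" using y X1' by (simp add: Z_def field_simps)
  have cv: "c = ((of_nat m - 1) * (Z * X) - of_nat m * Z + X) / (X - 1)^2"
    using c X1' e2 by (simp add: Z_def field_simps)
  have y1: "1 + y = (Z - 1) / (X - 1)" using yv X1' by (simp add: field_simps)
  define N where "N = (of_nat m - 1) * (Z * X) - of_nat m * Z + X"
  have cv': "c = N / (X - 1)^2" using cv by (simp add: N_def)
  have s1: "c * (1 / ((1 + y)^2 * D)) = N / (Z - 1)^2 / D"
    unfolding cv' y1 using X1' Z1 D by (simp add: field_simps)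
  have s2: "c * (1 / (1 + y)) = N / ((X - 1) * (Z - 1))"
    unfolding cv' y1 using X1' Z1 by (simp add: divide_simps power2_eq_square)
  have a1: "(Z - X) / (X - 1) = (Z - X) * (Z - 1) / ((X - 1) * (Z - 1))" using Z1 by simp
  have num: "(Z - X) * (Z - 1) - N = Z * Z - of_nat m * (Z * X) + (of_nat m - 1) * Z"
    unfolding N_def by (simp add: algebra_simps)
  have s3: "y - N / ((X - 1) * (Z - 1)) = (Z * Z - of_nat m * (Z * X) + (of_nat m - 1) * Z) / ((Z - 1) * (X - 1))"
    unfolding yv a1 diff_divide_distrib[symmetric] num by (simp add: mult.commute)
  have "y + c * (1 / ((1 + y)^2 * D) - 1 / (1 + y)) = (y - c * (1 / (1 + y))) + c * (1 / ((1 + y)^2 * D))"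
    by (simp add: algebra_simps)
  also have "\<dots> = (Z * Z - of_nat m * (Z * X) + (of_nat m - 1) * Z) / ((Z - 1) * (X - 1)) + N / (Z - 1)^2 / D"
    unfolding s1 s2 s3 ..
  finally show ?thesis unfolding e1 e2 Z_def[symmetric] N_def .
qed




theorem corollary5p3:
  fixes m k :: nat and x :: "nat \<Rightarrow> complex"
  assumes "m \<ge> 1" and "k \<ge> 1"
    and "(\<Sum>i=1..k. norm (x i)) < 1"
  shows "(word_weight x has_sum
           ((\<Sum>i=1..k. (x i ^ (2*m) - of_nat m * x i ^ (m+1) + (of_nat m - 1) * x i ^ m)
                        / ((x i ^ m - 1) * (x i - 1)))
            + (\<Sum>i=1..k. ((of_nat m - 1) * x i ^ (m+1) - of_nat m * x i ^ m + x i) / (x i ^ m - 1)^2)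
              / (1 - (\<Sum>i=1..k. (x i ^ m - x i) / (x i ^ m - 1)))))
         {W. W \<noteq> [] \<and> set W \<subseteq> {1..k} \<and> cyc_avoids_run m W}"
proof -
  have m1: "m \<ge> 1" by fact
  let ?w = "word_weight x"
  let ?All = "{W. set W \<subseteq> {1..k}}"
  have summ: "?w summable_on E" if "E \<subseteq> ?All" for E
    using summable_on_subset_banach[OF summable_all[OF assms(3)] that] .
  have LinAll: "Lin m k \<subseteq> ?All" by (auto simp: Lin_def)
  have sLin: "?w summable_on Lin m k" by (rule summ[OF LinAll])
  have sub: "E \<subseteq> Lin m k \<Longrightarrow> ?w summable_on E" for E using summ LinAll by blast
  define y where "y a = (\<Sum>r\<in>{1..<m}. x a ^ r)" for a
  define c where "c a = (\<Sum>s\<in>{1..<m}. of_nat s * x a ^ s)" for a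
  define Ls where "Ls = infsum ?w (Lin m k)"
  define P where "P a = infsum ?w (Ends m k a)" for a
  define M where "M a = infsum ?w (Mid m k a)" for a
  have hLin: "(?w has_sum Ls) (Lin m k)" using sLin by (simp add: Ls_def)
  have hEnds: "(?w has_sum P a) (Ends m k a)" for a
    unfolding P_def by (rule has_sum_infsum, rule sub) (auto simp: Ends_def)
  have hMid: "(?w has_sum M a) (Mid m k a)" for a
    unfolding M_def by (rule has_sum_infsum, rule sub) (auto simp: Mid_def)
  have hNE: "(?w has_sum (Ls - P a)) (NE m k a)" for a
  proof -
    have s: "(?w has_sum infsum ?w (NE m k a)) (NE m k a)"
      by (rule has_sum_infsum, rule sub) (auto simp: NE_def)
    have "(?w has_sum (infsum ?w (NE m k a) + P a)) (NE m k a \<union> Ends m k a)"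
      by (rule has_sum_Un_disjoint[OF s hEnds]) (auto simp: NE_def Ends_def)
    moreover have "NE m k a \<union> Ends m k a = Lin m k" by (auto simp: NE_def Ends_def)
    ultimately have "infsum ?w (NE m k a) + P a = Ls" using hLin has_sum_unique by metis
    then show ?thesis using s by (metis add_diff_cancel_right')
  qed
  have eqP: "P a = y a * (Ls - P a)" if a: "a \<in> {1..k}" for a
  proof -
    have "(?w has_sum ((\<Sum>r\<in>{1..<m}. x a ^ r) * (Ls - P a))) (Ends m k a)"
    proof (rule prod_has_sum[OF snoc_inj_on Ends_image[OF a, symmetric]])
      show "?w summable_on Ends m k a" by (rule sub) (auto simp: Ends_def)
    qed (auto simp: snocmap_def hNE)
    then show ?thesis using hEnds has_sum_unique unfolding y_def by metis
  qed
  have eqL: "Ls = 1 + (\<Sum>a\<in>{1..k}. P a)"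
  proof -
    have u: "(?w has_sum (\<Sum>a\<in>{1..k}. P a)) (\<Union>a\<in>{1..k}. Ends m k a)"
      by (rule sum_has_sum[OF _ hEnds]) (auto simp: Ends_def)
    have "[] \<notin> (\<Union>a\<in>{1..k}. Ends m k a)" by (auto simp: Ends_def)
    from has_sum_insert[OF this u]
    have "(?w has_sum (1 + (\<Sum>a\<in>{1..k}. P a))) (Lin m k)" by (simp add: Lin_decomp[OF m1])
    then show ?thesis using hLin has_sum_unique by metis
  qed
  have eqBS: "Ls - P a = 1 + (M a + y a * M a)" if a: "a \<in> {1..k}" for a
  proof -
    have h1: "(?w has_sum (Ls - P a)) (BS m k a)"
    proof -
      have "((\<lambda>V. ?w (rev V)) has_sum (Ls - P a)) (NE m k a)" using hNE[of a] by simp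
      then show ?thesis using has_sum_reindex_bij_betw[OF rev_bij[of m k a], of ?w "Ls - P a"] by simp
    qed
    have hEM: "(?w has_sum ((\<Sum>r\<in>{1..<m}. x a ^ r) * M a)) (EM m k a)"
    proof (rule prod_has_sum[OF _ EM_image[OF a, symmetric]])
      show "inj_on (snocmap a) ({1..<m} \<times> Mid m k a)"
        by (rule inj_on_subset[OF snoc_inj_on]) (use Mid_NE in blast)
      show "?w summable_on EM m k a" by (rule sub) (auto simp: EM_def)
    qed (auto simp: snocmap_def hMid)
    have "(?w has_sum (M a + (\<Sum>r\<in>{1..<m}. x a ^ r) * M a)) (Mid m k a \<union> EM m k a)"
      by (rule has_sum_Un_disjoint[OF hMid hEM]) (auto simp: Mid_def EM_def)
    moreover have "[] \<notin> Mid m k a \<union> EM m k a" by (auto simp: Mid_def EM_def)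
    ultimately have "(?w has_sum (?w [] + (M a + (\<Sum>r\<in>{1..<m}. x a ^ r) * M a))) (insert [] (Mid m k a \<union> EM m k a))"
      by (intro has_sum_insert)
    then have "(?w has_sum (1 + (M a + y a * M a))) (BS m k a)"
      unfolding BS_decomp[OF m1] y_def by simp
    from has_sum_unique[OF h1 this] show ?thesis .
  qed
  have hCycA: "(?w has_sum (y a + c a * M a)) (CycA m k a)" if a: "a \<in> {1..k}" for a
  proof -
    have hC: "(?w has_sum y a) (Const m a)"
    proof (rule has_sum_finiteI)
      show "finite (Const m a)" by (simp add: Const_def)
      show "y a = sum ?w (Const m a)"
        unfolding Const_def y_def by (subst sum.reindex[OF const_inj]) simp
    qed
    have cs: "(\<Sum>sp\<in>Sigma {1..<m} (\<lambda>s. {1..s}). x a ^ fst sp) = c a"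
    proof -
      have "(\<Sum>s\<in>{1..<m}. \<Sum>p\<in>{1..s}. x a ^ s) = (\<Sum>sp\<in>Sigma {1..<m} (\<lambda>s. {1..s}). x a ^ fst sp)"
        by (subst sum.Sigma) (simp_all add: split_def)
      moreover have "(\<Sum>s\<in>{1..<m}. \<Sum>p\<in>{1..s}. x a ^ s) = c a"
        unfolding c_def by (rule sum.cong) simp_all
      ultimately show ?thesis by simp
    qed
    have hN: "(?w has_sum ((\<Sum>sp\<in>Sigma {1..<m} (\<lambda>s. {1..s}). x a ^ fst sp) * M a)) (NC m k a)"
    proof (rule prod_has_sum[OF nc_inj NC_def[symmetric]])
      show "?w summable_on NC m k a"
        by (rule summ) (use CycA_decomp[OF a] in \<open>auto simp: CycA_def Cyc_def\<close>)
      fix sp V assume sp: "sp \<in> Sigma {1..<m} (\<lambda>s. {1..s})" and "V \<in> Mid m k a"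
      obtain s p where spe: "sp = (s, p)" by (cases sp)
      have "p \<le> s" using sp spe by simp
      then have "x a ^ p * x a ^ (s - p) = x a ^ s" by (simp add: power_add[symmetric])
      then show "?w (ncmap a (sp, V)) = x a ^ fst sp * ?w V"
        by (simp add: ncmap_def spe algebra_simps)
    qed (auto simp: hMid)
    have "(?w has_sum (y a + c a * M a)) (Const m a \<union> NC m k a)"
      using has_sum_Un_disjoint[OF hC hN Const_NC_disj] cs by simp
    then show ?thesis using CycA_decomp[OF a] by simp
  qed
  have hCyc: "(?w has_sum (\<Sum>a\<in>{1..k}. y a + c a * M a)) (Cyc m k)"
    unfolding Cyc_decomp by (rule sum_has_sum[OF _ hCycA]) (auto simp: CycA_def)
  have nx: "norm (x a) < 1" if a: "a \<in> {1..k}" for a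
  proof -
    have "norm (x a) \<le> (\<Sum>i=1..k. norm (x i))" by (rule member_le_sum[OF a]) auto
    then show ?thesis using assms(3) by simp
  qed
  have X1: "x a \<noteq> 1" if "a \<in> {1..k}" for a using nx[OF that] by auto
  have Xm: "x a ^ m \<noteq> 1" if "a \<in> {1..k}" for a
  proof
    assume "x a ^ m = 1"
    then have "norm (x a) ^ m = 1" by (metis norm_one norm_power)
    moreover have "norm (x a) ^ m < 1" using nx[OF that] m1 by (simp add: power_less_one_iff)
    ultimately show False by simp
  qed
  have yc: "(x a - 1) * y a = x a ^ m - x a" for a unfolding y_def by (rule y_closed[OF m1])
  have y1: "1 + y a \<noteq> 0" if a: "a \<in> {1..k}" for a
  proof
    assume "1 + y a = 0"
    then have "(x a - 1) * (1 + y a) = 0" by simp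
    then have "x a ^ m - 1 = 0" using yc[of a] by (simp add: algebra_simps)
    then show False using Xm[OF a] by simp
  qed
  define D where "D = 1 - (\<Sum>a\<in>{1..k}. y a / (1 + y a))"
  have Pv: "P a = y a / (1 + y a) * Ls" if a: "a \<in> {1..k}" for a
    using eqP[OF a] y1[OF a] by (simp add: field_simps)
  have LD: "Ls * D = 1"
  proof -
    have "(\<Sum>a\<in>{1..k}. P a) = (\<Sum>a\<in>{1..k}. y a / (1 + y a) * Ls)"
      using Pv by (intro sum.cong) auto
    also have "\<dots> = (\<Sum>a\<in>{1..k}. y a / (1 + y a)) * Ls" by (rule sum_distrib_right[symmetric])
    finally have "Ls = 1 + (\<Sum>a\<in>{1..k}. y a / (1 + y a)) * Ls" using eqL by simp
    then show ?thesis unfolding D_def by (simp add: algebra_simps)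
  qed
  then have D0: "D \<noteq> 0" by auto
  have Mv: "M a = 1 / ((1 + y a)^2 * D) - 1 / (1 + y a)" if a: "a \<in> {1..k}" for a
  proof -
    have LsD: "Ls = 1 / D" using LD D0 by (simp add: field_simps)
    have "M a * (1 + y a) = Ls - P a - 1" using eqBS[OF a] by (simp add: algebra_simps)
    also have "\<dots> = Ls / (1 + y a) - 1" using Pv[OF a] y1[OF a] by (simp add: field_simps)
    finally have e: "M a * (1 + y a) = Ls / (1 + y a) - 1" .
    have "M a = (Ls / (1 + y a) - 1) / (1 + y a)" using e y1[OF a] by (subst eq_divide_eq) simp
    also have "\<dots> = Ls / (1 + y a) / (1 + y a) - 1 / (1 + y a)" by (rule diff_divide_distrib)
    also have "Ls / (1 + y a) / (1 + y a) = 1 / ((1 + y a)^2 * D)"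
      unfolding LsD by (simp add: power2_eq_square mult.commute)
    finally show ?thesis .
  qed
  have Dv: "D = 1 - (\<Sum>i=1..k. (x i ^ m - x i) / (x i ^ m - 1))"
  proof -
    have "y a / (1 + y a) = (x a ^ m - x a) / (x a ^ m - 1)" if a: "a \<in> {1..k}" for a
    proof -
      have "(x a - 1) * (1 + y a) = x a ^ m - 1" using yc[of a] by (simp add: algebra_simps)
      then have "1 + y a = (x a ^ m - 1) / (x a - 1)" using X1[OF a] by (simp add: field_simps)
      moreover have "y a = (x a ^ m - x a) / (x a - 1)" using yc[of a] X1[OF a] by (simp add: field_simps)
      ultimately show ?thesis using X1[OF a] Xm[OF a] by simp
    qed
    then show ?thesis unfolding D_def by (metis (no_types, lifting) sum.cong)
  qed
  have per: "y a + c a * M a =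
    (x a ^ (2*m) - of_nat m * x a ^ (m+1) + (of_nat m - 1) * x a ^ m) / ((x a ^ m - 1) * (x a - 1))
    + ((of_nat m - 1) * x a ^ (m+1) - of_nat m * x a ^ m + x a) / (x a ^ m - 1)^2 / D"
    if a: "a \<in> {1..k}" for a
    unfolding Mv[OF a] by (rule final_alg[OF X1[OF a] Xm[OF a] D0 yc]) (unfold c_def, rule c_closed)
  have "(\<Sum>a\<in>{1..k}. y a + c a * M a) =
    (\<Sum>i=1..k. (x i ^ (2*m) - of_nat m * x i ^ (m+1) + (of_nat m - 1) * x i ^ m) / ((x i ^ m - 1) * (x i - 1)))
    + (\<Sum>i=1..k. ((of_nat m - 1) * x i ^ (m+1) - of_nat m * x i ^ m + x i) / (x i ^ m - 1)^2) / D"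
    by (simp add: per sum.distrib sum_divide_distrib)
  moreover have "Cyc m k = {W. W \<noteq> [] \<and> set W \<subseteq> {1..k} \<and> cyc_avoids_run m W}" by (simp add: Cyc_def)
  ultimately show ?thesis using hCyc Dv by simp
qed


end
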